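(* Let $\mathcal B$ be a symmetric bilinear form on a vector space $A$ and $s\in A$ a fixed vector. Define $\circ:A\otimes A\to A$ by $x\circ y=\mathcal B(x,y)s-\mathcal B(x,s)y$. Then $(A,\circ)$ is an anti-pre-Lie algebra. Moreover, $\mathcal B$ is invariant on $(A,\circ)$, i.e. $\mathcal B(x\circ y,z)=\mathcal B(y,[x,z])$ for all $x,y,z\in A$ where $[x,z]=x\circ z-z\circ x$, and hence $\mathcal B$ is a commutative 2-cocycle on the Lie algebra $(A,[-,-])$.
   Context: All vector spaces are finite-dimensional over a field $\mathbb F$ of characteristic $0$. An anti-pre-Lie algebra is a vector space $A$ with a bilinear operation $\circ$ such that, writing $[x,y]=x\circ y-y\circ x$, for all $x,y,z\in A$: (i) $x\circ(y\circ z)-y\circ(x\circ z)=[y,x]\circ z$, and (ii) $[x,y]\circ z+[y,z]\circ x+[z,x]\circ y=0$. A commutative 2-cocycle on a Lie algebra is a symmetric bilinear form $\mathcal B$ with $\mathcal B([x,y],z)+\mathcal B([y,z],x)+\mathcal B([z,x],y)=0$. *)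

theory Defs
  imports Main "HOL.Vector_Spaces"
begin

definition fin_dim_vs :: "('a::field_char_0 \<Rightarrow> 'v::ab_group_add \<Rightarrow> 'v) \<Rightarrow> bool" where
  "fin_dim_vs scale \<longleftrightarrow> (\<exists>Bs::'v set. finite_dimensional_vector_space scale Bs)"

definition bilinear_map ::
  "('a::field \<Rightarrow> 'u::ab_group_add \<Rightarrow> 'u) \<Rightarrow> ('a \<Rightarrow> 'v::ab_group_add \<Rightarrow> 'v)
   \<Rightarrow> ('a \<Rightarrow> 'w::ab_group_add \<Rightarrow> 'w) \<Rightarrow> ('u \<Rightarrow> 'v \<Rightarrow> 'w) \<Rightarrow> bool" where
  "bilinear_map s1 s2 s3 f \<longleftrightarrow>
     (\<forall>x. Vector_Spaces.linear s2 s3 (f x)) \<and> (\<forall>y. Vector_Spaces.linear s1 s3 (\<lambda>x. f x y))"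

definition bilinear_form ::
  "('a::field \<Rightarrow> 'v::ab_group_add \<Rightarrow> 'v) \<Rightarrow> ('v \<Rightarrow> 'v \<Rightarrow> 'a) \<Rightarrow> bool" where
  "bilinear_form scale B \<longleftrightarrow> bilinear_map scale scale (*) B"

definition symmetric_form :: "('v \<Rightarrow> 'v \<Rightarrow> 'a) \<Rightarrow> bool" where
  "symmetric_form B \<longleftrightarrow> (\<forall>x y. B x y = B y x)"

definition commutator :: "('v \<Rightarrow> 'v \<Rightarrow> 'v::ab_group_add) \<Rightarrow> 'v \<Rightarrow> 'v \<Rightarrow> 'v" where
  "commutator m x y = m x y - m y x"

definition anti_pre_Lie ::
  "('a::field \<Rightarrow> 'v::ab_group_add \<Rightarrow> 'v) \<Rightarrow> ('v \<Rightarrow> 'v \<Rightarrow> 'v) \<Rightarrow> bool" where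
  "anti_pre_Lie scale m \<longleftrightarrow> bilinear_map scale scale scale m \<and>
     (\<forall>x y z. m x (m y z) - m y (m x z) = m (commutator m y x) z) \<and>
     (\<forall>x y z. m (commutator m x y) z + m (commutator m y z) x + m (commutator m z x) y = 0)"

definition invariant_form ::
  "('v \<Rightarrow> 'v \<Rightarrow> 'a) \<Rightarrow> ('v \<Rightarrow> 'v \<Rightarrow> 'v::ab_group_add) \<Rightarrow> bool" where
  "invariant_form B m \<longleftrightarrow> (\<forall>x y z. B (m x y) z = B y (commutator m x z))"

definition commutative_2_cocycle ::
  "('a::field \<Rightarrow> 'v::ab_group_add \<Rightarrow> 'v) \<Rightarrow> ('v \<Rightarrow> 'v \<Rightarrow> 'a) \<Rightarrow> ('v \<Rightarrow> 'v \<Rightarrow> 'v) \<Rightarrow> bool" where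
  "commutative_2_cocycle scale B br \<longleftrightarrow> bilinear_form scale B \<and> symmetric_form B \<and>
     (\<forall>x y z. B (br x y) z + B (br y z) x + B (br z x) y = 0)"

end

theory Submission
  imports Defs
begin

theorem proposition2p27:
  fixes scale :: "'a::field_char_0 \<Rightarrow> 'v::ab_group_add \<Rightarrow> 'v"
    and B :: "'v \<Rightarrow> 'v \<Rightarrow> 'a" and s :: 'v
  assumes "vector_space scale"
    and "fin_dim_vs scale"
    and "bilinear_form scale B"
    and "symmetric_form B"
  defines "m \<equiv> (\<lambda>x y. scale (B x y) s - scale (B x s) y)"
  shows "anti_pre_Lie scale m \<and> invariant_form B m \<and>
         commutative_2_cocycle scale B (commutator m)"
proof -
  interpret V: vector_space scale by fact
  have lin: "\<And>x. Vector_Spaces.linear scale (*) (B x)"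
    using assms(3) unfolding bilinear_form_def bilinear_map_def by blast
  have vsF: "vector_space ((*)::'a\<Rightarrow>'a\<Rightarrow>'a)" using lin[of s] unfolding linear_iff by blast
  have Badd: "\<And>x y z. B x (y + z) = B x y + B x z" and Bsc: "\<And>x c y. B x (scale c y) = c * B x y"
    using lin unfolding linear_iff by auto
  have sym: "\<And>x y. B x y = B y x" using assms(4) unfolding symmetric_form_def by blast
  have Bdiff: "\<And>x y z. B x (y - z) = B x y - B x z"
    by (metis Badd add_diff_cancel diff_add_cancel eq_diff_eq)
  have Badd2: "\<And>x y z. B (y + z) x = B y x + B z x" and Bsc2: "\<And>x c y. B (scale c y) x = c * B y x"
    and Bdiff2: "\<And>x y z. B (y - z) x = B y x - B z x"
    using Badd Bsc Bdiff sym by metis+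
  note Bs = Badd Bsc Bdiff Badd2 Bsc2 Bdiff2
  have lm1: "Vector_Spaces.linear scale scale (m x)" for x
    unfolding linear_iff m_def
    by (auto simp: assms(1) Bs V.scale_right_diff_distrib V.scale_right_distrib V.scale_left_distrib
         algebra_simps V.scale_scale V.scale_left_commute[of _ "B x s"])
  have lm2: "Vector_Spaces.linear scale scale (\<lambda>x. m x y)" for y
    unfolding linear_iff m_def
    by (auto simp: assms(1) Bs V.scale_right_diff_distrib V.scale_right_distrib V.scale_left_distrib
         algebra_simps V.scale_scale)
  have com: "commutator m x y = scale (B y s) x - scale (B x s) y" for x y
    unfolding commutator_def m_def using sym[of x y] by simp
  have i1: "m x (m y z) - m y (m x z) = m (commutator m y x) z" for x y z
    unfolding com unfolding m_def
    by (simp add: Bs V.scale_right_diff_distrib V.scale_left_diff_distrib V.scale_scale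
        V.scale_right_distrib V.scale_left_distrib algebra_simps sym[of _ s])
  have i2: "m (commutator m x y) z + m (commutator m y z) x + m (commutator m z x) y = 0" for x y z
    unfolding com unfolding m_def
    by (simp add: Bs V.scale_right_diff_distrib V.scale_left_diff_distrib V.scale_scale
        V.scale_right_distrib V.scale_left_distrib algebra_simps sym[of _ s] sym[of z y] sym[of z x] sym[of y x])
  have inv: "invariant_form B m"
    unfolding invariant_form_def com unfolding m_def
    by (simp add: Bs algebra_simps sym)
  have cyc: "B (commutator m x y) z + B (commutator m y z) x + B (commutator m z x) y = 0" for x y z
    unfolding com by (simp add: Bs algebra_simps sym)
  show ?thesis
    unfolding anti_pre_Lie_def commutative_2_cocycle_def bilinear_map_def
    using lm1 lm2 i1 i2 inv cyc assms(3,4) by blast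
qed

end
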